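(* Let $f$ be a Boolean function, let $a$ be a truth assignment to a superset of $var(f)$, let $x\in var(f)$, and let $\ell\in\{x,\overline{x}\}$ be the literal on $x$ satisfied by $a$. Then $$\textit{SR}(f,a)=\{t\wedge\ell\mid t\in\textit{SR}(f|\ell,a),\ t\not\models f|\overline{\ell}\}\ \cup\ \textit{SR}(f|\overline{x}\wedge f|x,\,a).$$
   Context: A term is a conjunction of literals; $t$ is an implicant of $f$ if $t\models f$, and a prime implicant if no term obtained from $t$ by deleting one literal is an implicant of $f$. $var(f)$ is the set of variables of $f$. For a literal $\ell$ on $x$, $f|\ell$ is the Boolean function over $var(f)\setminus\{x\}$ obtained by fixing $x$ so that $\ell$ is true. For a Boolean function $f$ and an assignment $a$ to a superset of $var(f)$, $\textit{SR}(f,a)$ denotes the set of prime implicants of $f$ that are satisfied by $a$ (the sufficient reasons for $a$ given $f$ when $a$ satisfies $f$). *)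

theory Defs
  imports Main
begin

text \<open>A truth assignment is a total function 'v => bool
  (an assignment to any superset of var(f) extends to one). A Boolean function is a
  predicate on assignments; its variable set var(f) is a finite set V on which it depends.\<close>

type_synonym 'v assignment = "'v \<Rightarrow> bool"
type_synonym 'v boolfun = "'v assignment \<Rightarrow> bool"

text \<open>A literal on variable v: (v, True) is v, (v, False) is its negation.\<close>
type_synonym 'v literal = "'v \<times> bool"

type_synonym 'v bterm = "'v literal set"

definition depends_only :: "'v boolfun \<Rightarrow> 'v set \<Rightarrow> bool" where
  "depends_only f V \<longleftrightarrow> (\<forall>a b. (\<forall>v\<in>V. a v = b v) \<longrightarrow> f a = f b)"

definition lit_neg :: "'v literal \<Rightarrow> 'v literal" where
  "lit_neg l = (fst l, \<not> snd l)"

definition sat_lit :: "'v assignment \<Rightarrow> 'v literal \<Rightarrow> bool" where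
  "sat_lit a l \<longleftrightarrow> a (fst l) = snd l"

definition sat_term :: "'v assignment \<Rightarrow> 'v bterm \<Rightarrow> bool" where
  "sat_term a t \<longleftrightarrow> (\<forall>l\<in>t. sat_lit a l)"

definition implicant :: "'v bterm \<Rightarrow> 'v boolfun \<Rightarrow> bool" where
  "implicant t f \<longleftrightarrow> (\<forall>b. sat_term b t \<longrightarrow> f b)"

definition prime_implicant :: "'v bterm \<Rightarrow> 'v boolfun \<Rightarrow> bool" where
  "prime_implicant t f \<longleftrightarrow> finite t \<and> implicant t f \<and> (\<forall>l\<in>t. \<not> implicant (t - {l}) f)"

text \<open>Conditioning f|l: fix the variable of l so that l is true.\<close>
definition cond :: "'v boolfun \<Rightarrow> 'v literal \<Rightarrow> 'v boolfun" where
  "cond f l = (\<lambda>b. f (b(fst l := snd l)))"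

definition SR :: "'v boolfun \<Rightarrow> 'v assignment \<Rightarrow> 'v bterm set" where
  "SR f a = {t. prime_implicant t f \<and> sat_term a t}"

end

theory Submission
  imports Defs
begin

lemma sat_upd:
  assumes "\<forall>m\<in>t. fst m \<noteq> x"
  shows "sat_term (b(x:=v)) t = sat_term b t"
  using assms unfolding sat_term_def sat_lit_def by auto

lemma noX:
  assumes "prime_implicant t g" "sat_term a t" "\<And>b v. g (b(x:=v)) = g b"
  shows "\<forall>m\<in>t. fst m \<noteq> x"
proof (rule ccontr)
  assume "\<not> (\<forall>m\<in>t. fst m \<noteq> x)"
  then obtain m0 where m0: "m0 \<in> t" "fst m0 = x" by blast
  define v where "v = snd m0"
  have "m0 = (x,v)" using m0(2) v_def by (cases m0) simp
  hence m: "(x,v) \<in> t" using m0(1) by simp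
  have "implicant (t - {(x,v)}) g"
    unfolding implicant_def
  proof (intro allI impI)
    fix b assume b: "sat_term b (t - {(x,v)})"
    have "sat_lit (b(x:=v)) m'" if m': "m' \<in> t" for m'
    proof (cases "fst m' = x")
      case True
      have "a (fst m') = snd m'" "a x = v" using assms(2) m m' unfolding sat_term_def sat_lit_def by auto
      thus ?thesis using True unfolding sat_lit_def by simp
    next
      case False
      hence "m' \<in> t - {(x,v)}" using m' by auto
      hence "b (fst m') = snd m'" using b unfolding sat_term_def sat_lit_def by blast
      thus ?thesis using False unfolding sat_lit_def by simp
    qed
    hence "sat_term (b(x:=v)) t" unfolding sat_term_def by blast
    with assms(1) have "g (b(x:=v))" unfolding prime_implicant_def implicant_def by blast
    thus "g b" using assms(3) by simp
  qed
  with assms(1) m show False unfolding prime_implicant_def by blast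
qed

lemma ext_x: "b(x := b x) = b" by simp

theorem proposition15:
  fixes f :: "'v boolfun" and V :: "'v set" and a :: "'v assignment"
    and x :: 'v and l :: "'v literal"
  assumes "finite V" and "depends_only f V"
    and "x \<in> V"
    and "l \<in> {(x, True), (x, False)}" and "sat_lit a l"
  shows "SR f a =
    {insert l t | t. t \<in> SR (cond f l) a \<and> \<not> implicant t (cond f (lit_neg l))}
    \<union> SR (\<lambda>b. cond f (x, False) b \<and> cond f (x, True) b) a"
proof -
  obtain s where ls: "l = (x,s)" using assms(4) by auto
  have as: "a x = s" using assms(5) ls by (simp add: sat_lit_def)
  define f1 where "f1 = cond f l"
  define f0 where "f0 = cond f (lit_neg l)"
  define h where "h = (\<lambda>b. cond f (x, False) b \<and> cond f (x, True) b)"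
  have f1: "\<And>b. f1 b = f (b(x:=s))" by (simp add: f1_def cond_def ls)
  have f0: "\<And>b. f0 b = f (b(x:=\<not>s))" by (simp add: f0_def cond_def ls lit_neg_def)
  have h: "\<And>b. h b = (f (b(x:=False)) \<and> f (b(x:=True)))" by (simp add: h_def cond_def)
  have f1i: "\<And>b v. f1 (b(x:=v)) = f1 b" by (simp add: f1)
  have hi: "\<And>b v. h (b(x:=v)) = h b" by (simp add: h)
  have hf: "f b" if hb: "h b" for b
  proof -
    have "f (b(x := b x))" using h[of b] hb by (cases "b x") simp_all
    thus "f b" by simp
  qed
  have fcase: "\<And>b. f b = (if b x = s then f1 b else f0 b)"
  proof -
    fix b
    show "f b = (if b x = s then f1 b else f0 b)"
    proof (cases "b x = s")
      case True
      hence "b(x:=s) = b" by (rule fun_upd_idem)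
      thus ?thesis using True f1 by simp
    next
      case False
      hence "b x = (\<not>s)" by auto
      hence "b(x:=\<not>s) = b" by (rule fun_upd_idem)
      thus ?thesis using False f0 by simp
    qed
  qed
  have A: "SR f a \<subseteq> {insert l t | t. t \<in> SR f1 a \<and> \<not> implicant t f0} \<union> SR h a"
  proof
    fix t assume "t \<in> SR f a"
    hence pt: "prime_implicant t f" and at: "sat_term a t" by (auto simp: SR_def)
    have fin: "finite t" using pt by (simp add: prime_implicant_def)
    have it: "implicant t f" using pt by (simp add: prime_implicant_def)
    have cons: "\<And>v. (x,v) \<in> t \<Longrightarrow> v = s" using at as by (auto simp: sat_term_def sat_lit_def)
    show "t \<in> {insert l t | t. t \<in> SR f1 a \<and> \<not> implicant t f0} \<union> SR h a"
    proof (cases "l \<in> t")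
      case True
      define u where "u = t - {l}"
      have tu: "t = insert l u" using True u_def by auto
      have nx: "\<forall>m\<in>u. fst m \<noteq> x" using cons u_def ls by force
      have "implicant u f1" unfolding implicant_def
      proof (intro allI impI)
        fix b assume "sat_term b u"
        hence "sat_term (b(x:=s)) t" using sat_upd[OF nx] tu ls
          by (simp add: sat_term_def sat_lit_def)
        thus "f1 b" using it f1 by (simp add: implicant_def)
      qed
      moreover have "\<not> implicant (u - {m}) f1" if m: "m \<in> u" for m
      proof
        assume i: "implicant (u - {m}) f1"
        have "implicant (t - {m}) f" unfolding implicant_def
        proof (intro allI impI)
          fix b assume b: "sat_term b (t - {m})"
          have "m \<noteq> l" using m u_def by auto
          hence "l \<in> t - {m}" using True by auto
          hence "sat_lit b l" using b unfolding sat_term_def by blast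
          hence bx: "b x = s" using ls by (simp add: sat_lit_def)
          have "sat_term b (u - {m})" using b tu by (auto simp: sat_term_def)
          hence "f1 b" using i by (simp add: implicant_def)
          thus "f b" using fcase bx by simp
        qed
        moreover have "m \<in> t" using m tu by auto
        ultimately show False using pt by (auto simp: prime_implicant_def)
      qed
      moreover have "\<not> implicant u f0"
      proof
        assume i: "implicant u f0"
        have "implicant (t - {l}) f" unfolding implicant_def
        proof (intro allI impI)
          fix b assume b: "sat_term b (t - {l})"
          hence bu: "sat_term b u" by (simp add: u_def)
          show "f b"
          proof (cases "b x = s")
            case True
            have "sat_term b t" using bu tu True ls by (simp add: sat_term_def sat_lit_def)
            thus ?thesis using it by (simp add: implicant_def)
          next
            case False
            have "f0 b" using i bu by (simp add: implicant_def)
            thus ?thesis using fcase False by simp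
          qed
        qed
        thus False using pt True by (auto simp: prime_implicant_def)
      qed
      moreover have "sat_term a u" using at u_def by (simp add: sat_term_def)
      moreover have "finite u" using fin u_def by simp
      ultimately have "u \<in> SR f1 a" "\<not> implicant u f0"
        by (auto simp: SR_def prime_implicant_def)
      thus ?thesis using tu by blast
    next
      case False
      have nx: "\<forall>m\<in>t. fst m \<noteq> x" using cons False ls by force
      have "implicant t h" unfolding implicant_def
      proof (intro allI impI)
        fix b assume "sat_term b t"
        hence "sat_term (b(x:=False)) t" "sat_term (b(x:=True)) t" using sat_upd[OF nx] by auto
        thus "h b" using it h by (simp add: implicant_def)
      qed
      moreover have "\<not> implicant (t - {m}) h" if "m \<in> t" for m
        using pt that hf unfolding prime_implicant_def implicant_def by blast
      ultimately have "t \<in> SR h a" using fin at by (simp add: SR_def prime_implicant_def)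
      thus ?thesis by blast
    qed
  qed
  have B: "{insert l t | t. t \<in> SR f1 a \<and> \<not> implicant t f0} \<subseteq> SR f a"
  proof
    fix t assume "t \<in> {insert l t | t. t \<in> SR f1 a \<and> \<not> implicant t f0}"
    then obtain u where tu: "t = insert l u" and pu: "prime_implicant u f1"
      and au: "sat_term a u" and ni: "\<not> implicant u f0" by (auto simp: SR_def)
    have nx: "\<forall>m\<in>u. fst m \<noteq> x" using noX[OF pu au f1i] .
    have lu: "l \<notin> u" using nx ls by auto
    have iu: "implicant u f1" using pu by (simp add: prime_implicant_def)
    have "implicant t f" unfolding implicant_def
    proof (intro allI impI)
      fix b assume b: "sat_term b t"
      hence bx: "b x = s" "sat_term b u" using tu ls by (auto simp: sat_term_def sat_lit_def)
      hence "f1 b" using iu by (simp add: implicant_def)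
      thus "f b" using fcase bx by simp
    qed
    moreover have "\<not> implicant (t - {m}) f" if m: "m \<in> t" for m
    proof (cases "m = l")
      case True
      show ?thesis
      proof
        assume i: "implicant (t - {m}) f"
        have "implicant u f0" unfolding implicant_def
        proof (intro allI impI)
          fix b assume "sat_term b u"
          hence "sat_term (b(x:=\<not>s)) (t - {m})" using sat_upd[OF nx] True tu lu by simp
          thus "f0 b" using i f0 by (simp add: implicant_def)
        qed
        thus False using ni by simp
      qed
    next
      case False
      hence mu: "m \<in> u" using m tu by auto
      have nx': "\<forall>m'\<in>u - {m}. fst m' \<noteq> x" using nx by auto
      show ?thesis
      proof
        assume i: "implicant (t - {m}) f"
        have "implicant (u - {m}) f1" unfolding implicant_def
        proof (intro allI impI)
          fix b assume "sat_term b (u - {m})"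
          hence "sat_term (b(x:=s)) (u - {m})" using sat_upd[OF nx'] by simp
          moreover have "t - {m} = insert l (u - {m})" using tu False by auto
          moreover have "sat_lit (b(x:=s)) l" using ls by (simp add: sat_lit_def)
          ultimately have "sat_term (b(x:=s)) (t - {m})" by (simp add: sat_term_def)
          thus "f1 b" using i f1 by (simp add: implicant_def)
        qed
        thus False using pu mu by (simp add: prime_implicant_def)
      qed
    qed
    moreover have "finite t" using pu tu by (simp add: prime_implicant_def)
    moreover have "sat_term a t" using au tu assms(5) by (simp add: sat_term_def)
    ultimately show "t \<in> SR f a" by (simp add: SR_def prime_implicant_def)
  qed
  have C: "SR h a \<subseteq> SR f a"
  proof
    fix t assume "t \<in> SR h a"
    hence pt: "prime_implicant t h" and at: "sat_term a t" by (auto simp: SR_def)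
    have nx: "\<forall>m\<in>t. fst m \<noteq> x" using noX[OF pt at hi] .
    have "implicant t f" using pt hf by (auto simp: prime_implicant_def implicant_def)
    moreover have "\<not> implicant (t - {m}) f" if m: "m \<in> t" for m
    proof
      assume i: "implicant (t - {m}) f"
      have nx': "\<forall>m'\<in>t - {m}. fst m' \<noteq> x" using nx by auto
      have "implicant (t - {m}) h" unfolding implicant_def
      proof (intro allI impI)
        fix b assume "sat_term b (t - {m})"
        hence "sat_term (b(x:=False)) (t - {m})" "sat_term (b(x:=True)) (t - {m})"
          using sat_upd[OF nx'] by auto
        thus "h b" using i h by (simp add: implicant_def)
      qed
      thus False using pt m by (simp add: prime_implicant_def)
    qed
    ultimately show "t \<in> SR f a" using pt at by (simp add: SR_def prime_implicant_def)
  qed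
  have E: "SR f a = {insert l t | t. t \<in> SR f1 a \<and> \<not> implicant t f0} \<union> SR h a"
    by (rule subset_antisym[OF A Un_least[OF B C]])
  show ?thesis unfolding f1_def[symmetric] f0_def[symmetric] h_def[symmetric] by (rule E)
qed

end
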